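(* Let $f\colon G\to G$ and $g\colon G'\to G'$ be continuous maps of graphs, and let $E\subseteq G$ be a closed set with $f(E)\subseteq E$. Suppose $\varphi\colon G\to G'$ is a semi-conjugacy between $f$ and $g$ which is an almost conjugacy between $f|_E$ and $g$. If $g$ is an irrational rotation of the circle (so $G'$ is a circle), then $f$ has no scrambled pair.
   Context: A graph is a non-degenerate compact connected metric space containing a finite subset $V$ such that each connected component of the complement of $V$ is homeomorphic to an open interval. A continuous map $\varphi\colon G\to G'$ is a semi-conjugacy between $f$ and $g$ if $\varphi$ is onto and $\varphi\circ f=g\circ\varphi$. If $E\subseteq G$ is closed with $f(E)\subseteq E$, such a semi-conjugacy is an almost conjugacy between $f|_E$ and $g$ if: $\varphi(E)=G'$; for every $y\in G'$, $\varphi^{-1}(y)$ is connected; for every $y\in G'$, $\varphi^{-1}(y)\cap E=\partial\varphi^{-1}(y)$ (boundary in $G$); and there is $N\ge1$ such that $\varphi^{-1}(y)\cap E$ has at most $N$ elements for every $y\in G'$. A pair $(x,y)$ is scrambled if $\liminf_{n\to\infty}d(f^n(x),f^n(y))=0$ and $\limsup_{n\to\infty}d(f^n(x),f^n(y))>0$. *)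

theory Defs
  imports "HOL-Analysis.Analysis"
begin

definition is_graph :: "'a::metric_space set \<Rightarrow> bool" where
  "is_graph G \<longleftrightarrow> compact G \<and> connected G \<and> (\<exists>a b. a \<in> G \<and> b \<in> G \<and> a \<noteq> b) \<and>
     (\<exists>V. finite V \<and> V \<subseteq> G \<and>
        (\<forall>C \<in> components (G - V). C homeomorphic {0<..<(1::real)}))"

definition semi_conjugacy ::
  "'a::metric_space set \<Rightarrow> ('a \<Rightarrow> 'a) \<Rightarrow> 'b::metric_space set \<Rightarrow> ('b \<Rightarrow> 'b) \<Rightarrow> ('a \<Rightarrow> 'b) \<Rightarrow> bool" where
  "semi_conjugacy G f G' g \<phi> \<longleftrightarrow> continuous_on G \<phi> \<and> \<phi> ` G = G' \<and> (\<forall>x\<in>G. \<phi> (f x) = g (\<phi> x))"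

definition almost_conjugacy ::
  "'a::metric_space set \<Rightarrow> ('a \<Rightarrow> 'a) \<Rightarrow> 'a set \<Rightarrow> 'b::metric_space set \<Rightarrow> ('b \<Rightarrow> 'b) \<Rightarrow> ('a \<Rightarrow> 'b) \<Rightarrow> bool" where
  "almost_conjugacy G f E G' g \<phi> \<longleftrightarrow> semi_conjugacy G f G' g \<phi> \<and>
     \<phi> ` E = G' \<and>
     (\<forall>y\<in>G'. connected {x\<in>G. \<phi> x = y}) \<and>
     (\<forall>y\<in>G'. {x\<in>G. \<phi> x = y} \<inter> E = (top_of_set G) frontier_of {x\<in>G. \<phi> x = y}) \<and>
     (\<exists>N::nat. N \<ge> 1 \<and> (\<forall>y\<in>G'. finite ({x\<in>G. \<phi> x = y} \<inter> E) \<and> card ({x\<in>G. \<phi> x = y} \<inter> E) \<le> N))"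

definition scrambled_pair :: "('a::metric_space \<Rightarrow> 'a) \<Rightarrow> 'a \<Rightarrow> 'a \<Rightarrow> bool" where
  "scrambled_pair f x y \<longleftrightarrow>
     liminf (\<lambda>n. ereal (dist ((f ^^ n) x) ((f ^^ n) y))) = 0 \<and>
     limsup (\<lambda>n. ereal (dist ((f ^^ n) x) ((f ^^ n) y))) > 0"

definition irrational_rotation :: "'b::metric_space set \<Rightarrow> ('b \<Rightarrow> 'b) \<Rightarrow> bool" where
  "irrational_rotation G' g \<longleftrightarrow>
     (\<exists>h k (\<alpha>::real). homeomorphism G' (sphere (0::complex) 1) h k \<and> \<alpha> \<notin> \<rat> \<and>
        (\<forall>x\<in>G'. h (g x) = cis (2 * pi * \<alpha>) * h x))"

end

theory Submission imports Defs begin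

lemma circle_side:
  assumes T: "T \<subseteq> sphere (0::complex) 1" "connected T" "c \<in> T" "w \<in> T" "w \<noteq> c"
  shows "\<exists>\<delta>>0. \<delta> \<le> pi \<and> ((\<forall>t\<in>{0<..<\<delta>}. c * cis t \<in> T) \<or> (\<forall>t\<in>{0<..<\<delta>}. c * cis (-t) \<in> T))"
proof (cases "T = sphere 0 1")
  case True
  have "norm (c * cis t) = 1" for t using T(1,3) by (auto simp: norm_mult)
  then show ?thesis using True by (intro exI[of _ pi]) auto
next
  case False
  then obtain r where r: "r \<in> sphere (0::complex) 1" "r \<notin> T" using T(1) by blast
  define \<rho> where "\<rho> = - cnj r"
  have nr: "norm r = 1" using r by simp
  have rr: "r * cnj r = 1"
    using nr by (metis complex_norm_square mult.commute of_real_1 power_one)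
  have rho0: "\<rho> \<noteq> 0" using rr \<rho>_def by auto
  have nrho: "norm \<rho> = 1" using nr \<rho>_def by simp
  define T' where "T' = (\<lambda>z. \<rho> * z) ` T"
  have T'sph: "T' \<subseteq> sphere 0 1" using T(1) nrho by (auto simp: T'_def norm_mult)
  have notm1: "-1 \<notin> T'"
  proof
    assume "-1 \<in> T'"
    then obtain z where z: "z \<in> T" "\<rho> * z = -1" by (auto simp: T'_def)
    then have "r * (\<rho> * z) = - r" by simp
    moreover have "r * (\<rho> * z) = - ((r * cnj r) * z)" by (simp add: \<rho>_def)
    ultimately have "- z = - r" using rr by simp
    then show False using z r by simp
  qed
  have nonpos: "T' \<subseteq> - \<real>\<^sub>\<le>\<^sub>0"
  proof
    fix z assume z: "z \<in> T'"
    then have "norm z = 1" using T'sph by auto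
    moreover have "z \<noteq> -1" using z notm1 by auto
    ultimately show "z \<in> - \<real>\<^sub>\<le>\<^sub>0"
      by (auto simp: nonpos_Reals_def)
  qed
  have cT': "connected T'" unfolding T'_def
    by (intro connected_continuous_image T(2) continuous_intros)
  define A where "A = Arg ` T'"
  have cA: "connected A" unfolding A_def
    by (rule connected_continuous_image[OF continuous_on_subset[OF continuous_on_Arg nonpos] cT'])
  have cisArg: "cis (Arg z) = z" if "z \<in> T'" for z
  proof -
    have "norm z = 1" using that T'sph by auto
    then have "z \<noteq> 0" by auto
    then show ?thesis using cis_Arg[of z] \<open>norm z = 1\<close> by (auto simp: sgn_div_norm)
  qed
  define c' where "c' = \<rho> * c"
  define w' where "w' = \<rho> * w"
  have c'T: "c' \<in> T'" "w' \<in> T'" using T by (auto simp: T'_def c'_def w'_def)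
  have neq: "Arg c' \<noteq> Arg w'"
  proof
    assume "Arg c' = Arg w'"
    then have "c' = w'" using cisArg c'T by metis
    then show False using rho0 T(5) by (simp add: c'_def w'_def)
  qed
  have backT: "c * cis (s * t) \<in> T" if "Arg c' + s * t \<in> A" for s t
  proof -
    from that obtain z where z0: "z \<in> T'" "Arg c' + s * t = Arg z" unfolding A_def by blast
    then have z: "z \<in> T'" "Arg z = Arg c' + s * t" by auto
    have "z = cis (Arg c' + s * t)" using cisArg[OF z(1)] z(2) by simp
    also have "\<dots> = c' * cis (s * t)" using cisArg[OF c'T(1)] by (simp add: cis_mult[symmetric])
    finally have "z = \<rho> * (c * cis (s * t))" by (simp add: c'_def)
    moreover obtain z0 where "z0 \<in> T" "z = \<rho> * z0" using z(1) by (auto simp: T'_def)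
    ultimately show ?thesis using rho0 by auto
  qed
  have AT: "Arg c' \<in> A" "Arg w' \<in> A" using c'T by (auto simp: A_def)
  show ?thesis
  proof (cases "Arg c' < Arg w'")
    case True
    define \<delta> where "\<delta> = min (Arg w' - Arg c') pi"
    have "\<forall>t\<in>{0<..<\<delta>}. c * cis t \<in> T"
    proof
      fix t assume "t \<in> {0<..<\<delta>}"
      then have "Arg c' \<le> Arg c' + 1 * t" "Arg c' + 1 * t \<le> Arg w'" by (auto simp: \<delta>_def)
      then have "Arg c' + 1 * t \<in> A" using cA AT unfolding connected_iff_interval by blast
      then show "c * cis t \<in> T" using backT[of 1 t] by simp
    qed
    then show ?thesis using True by (intro exI[of _ \<delta>]) (auto simp: \<delta>_def)
  next
    case False
    then have F: "Arg w' < Arg c'" using neq by auto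
    define \<delta> where "\<delta> = min (Arg c' - Arg w') pi"
    have "\<forall>t\<in>{0<..<\<delta>}. c * cis (-t) \<in> T"
    proof
      fix t assume t: "t \<in> {0<..<\<delta>}"
      have "Arg w' \<le> Arg c' + (-1) * t" "Arg c' + (-1) * t \<le> Arg c'" using t by (auto simp: \<delta>_def)
      then have "Arg c' + (-1) * t \<in> A" using cA AT unfolding connected_iff_interval by blast
      then show "c * cis (-t) \<in> T" using backT[of "-1" t] by simp
    qed
    then show ?thesis using F by (intro exI[of _ \<delta>]) (auto simp: \<delta>_def)
  qed
qed


lemma comp_closure:
  fixes G :: "'a::metric_space set"
  assumes G: "compact G" and C: "C \<in> components (G - V)" and p: "p \<in> closure C" "p \<notin> V"
  shows "p \<in> C"
proof -
  obtain Z where Z: "closed Z" "C = (G - V) \<inter> Z"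
    using closedin_component[OF C] unfolding closedin_closed by blast
  have "closure C \<subseteq> Z" using Z by (simp add: closure_minimal)
  moreover have "closure C \<subseteq> G"
    using in_components_subset[OF C] compact_imp_closed[OF G] by (meson Diff_subset closure_minimal subset_trans)
  ultimately show ?thesis using p Z by auto
qed

lemma comp_vertex:
  fixes G :: "'a::metric_space set"
  assumes G: "compact G" and C: "C \<in> components (G - V)" and hC: "C homeomorphic {0<..<(1::real)}"
  shows "\<exists>v\<in>V. v \<in> closure C"
proof (rule ccontr)
  assume "\<not> ?thesis"
  then have "closure C \<subseteq> C" using comp_closure[OF G C] by blast
  then have "closed C" using closure_subset_eq by blast
  moreover have "C \<subseteq> G" using in_components_subset[OF C] by auto
  ultimately have "compact C" using G by (metis compact_Int_closed inf.absorb2)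
  then have "compact {0<..<(1::real)}" using homeomorphic_compactness[OF hC] by simp
  then have "closed {0<..<(1::real)}" by (rule compact_imp_closed)
  then have "closure {0<..<(1::real)} = {0<..<1}" by simp
  moreover have "(0::real) \<in> {0..1}" by simp
  ultimately show False by simp
qed

lemma circle_side2:
  assumes T: "T \<subseteq> sphere (0::complex) 1" "connected T" "c \<in> T" "w \<in> T" "w \<noteq> c"
  shows "\<exists>\<delta>>0. \<delta> \<le> pi \<and> (\<exists>s\<in>{1,-1::real}. \<forall>t\<in>{0<..<\<delta>}. c * cis (s * t) \<in> T)"
proof -
  obtain \<delta> where "\<delta> > 0" "\<delta> \<le> pi" "(\<forall>t\<in>{0<..<\<delta>}. c * cis t \<in> T) \<or> (\<forall>t\<in>{0<..<\<delta>}. c * cis (-t) \<in> T)"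
    using circle_side[OF T] by blast
  then show ?thesis by (intro exI[of _ \<delta>]) auto
qed

lemma fin_comps:
  fixes G :: "'a::metric_space set" and \<phi> :: "'a \<Rightarrow> 'b::metric_space"
  assumes G: "compact G" and V: "finite V" "V \<subseteq> G"
    and homC: "\<forall>C \<in> components (G - V). C homeomorphic {0<..<(1::real)}"
    and \<phi>: "continuous_on G \<phi>" "\<phi> ` G = G'"
    and fib: "\<forall>y\<in>G'. connected {x\<in>G. \<phi> x = y}"
    and hh: "homeomorphism G' (sphere (0::complex) 1) h k"
  shows "finite {C \<in> components (G - V). \<exists>p\<in>C. \<phi> p \<notin> \<phi> ` V}"
proof (rule ccontr)
  define Cs where "Cs = {C \<in> components (G - V). \<exists>p\<in>C. \<phi> p \<notin> \<phi> ` V}"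
  assume "infinite {C \<in> components (G - V). \<exists>p\<in>C. \<phi> p \<notin> \<phi> ` V}"
  then have infCs: "infinite Cs" by (simp add: Cs_def)
  have hcont: "continuous_on G' h" and hG': "h ` G' = sphere 0 1"
    using hh unfolding homeomorphism_def by auto
  have hinj: "\<And>u u'. u \<in> G' \<Longrightarrow> u' \<in> G' \<Longrightarrow> h u = h u' \<Longrightarrow> u = u'"
    using hh unfolding homeomorphism_def by metis
  have closedG: "closed G" using G compact_imp_closed by blast
  have key: "\<exists>v \<delta> s. v \<in> V \<and> v \<in> closure C \<and> \<delta> > 0 \<and> \<delta> \<le> pi \<and> s \<in> {1,-1::real} \<and>
      (\<forall>t\<in>{0<..<\<delta>}. h (\<phi> v) * cis (s * t) \<in> h ` \<phi> ` closure C)" if CCs: "C \<in> Cs" for C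
  proof -
    have C: "C \<in> components (G - V)" and "\<exists>p\<in>C. \<phi> p \<notin> \<phi> ` V" using CCs by (auto simp: Cs_def)
    then obtain p where p: "p \<in> C" "\<phi> p \<notin> \<phi> ` V" by blast
    obtain v where v: "v \<in> V" "v \<in> closure C" using comp_vertex[OF G C] homC C by blast
    have CG: "C \<subseteq> G" using in_components_subset[OF C] by auto
    have clG: "closure C \<subseteq> G" using CG closedG closure_minimal by blast
    have "connected (closure C)" using in_components_connected[OF C] connected_imp_connected_closure by blast
    then have "connected (\<phi> ` closure C)"
      using connected_continuous_image continuous_on_subset[OF \<phi>(1) clG] by blast
    moreover have sub: "\<phi> ` closure C \<subseteq> G'" using clG \<phi>(2) by auto
    ultimately have con: "connected (h ` \<phi> ` closure C)"
      using connected_continuous_image continuous_on_subset[OF hcont] by blast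
    have Tsph: "h ` \<phi> ` closure C \<subseteq> sphere 0 1" using sub hG' by auto
    have pcl: "p \<in> closure C" using p closure_subset by blast
    have ne: "h (\<phi> p) \<noteq> h (\<phi> v)"
    proof
      assume "h (\<phi> p) = h (\<phi> v)"
      then have "\<phi> p = \<phi> v" using hinj sub pcl v by blast
      then show False using p v by auto
    qed
    from circle_side2[OF Tsph con _ _ ne] v pcl
    obtain \<delta> s where "\<delta> > 0" "\<delta> \<le> pi" "s \<in> {1,-1::real}"
      "\<forall>t\<in>{0<..<\<delta>}. h (\<phi> v) * cis (s * t) \<in> h ` \<phi> ` closure C" by blast
    then show ?thesis using v by blast
  qed
  define vv where "vv C = (SOME v. \<exists>\<delta> s. v \<in> V \<and> v \<in> closure C \<and> \<delta> > 0 \<and> \<delta> \<le> pi \<and> s \<in> {1,-1::real} \<and>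
      (\<forall>t\<in>{0<..<\<delta>}. h (\<phi> v) * cis (s * t) \<in> h ` \<phi> ` closure C))" for C
  define ss where "ss C = (SOME s. \<exists>\<delta>. vv C \<in> V \<and> vv C \<in> closure C \<and> \<delta> > 0 \<and> \<delta> \<le> pi \<and> s \<in> {1,-1::real} \<and>
      (\<forall>t\<in>{0<..<\<delta>}. h (\<phi> (vv C)) * cis (s * t) \<in> h ` \<phi> ` closure C))" for C
  have key2: "\<exists>\<delta>. vv C \<in> V \<and> vv C \<in> closure C \<and> \<delta> > 0 \<and> \<delta> \<le> pi \<and> ss C \<in> {1,-1::real} \<and>
      (\<forall>t\<in>{0<..<\<delta>}. h (\<phi> (vv C)) * cis (ss C * t) \<in> h ` \<phi> ` closure C)" if "C \<in> Cs" for C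
  proof -
    have "\<exists>\<delta> s. vv C \<in> V \<and> vv C \<in> closure C \<and> \<delta> > 0 \<and> \<delta> \<le> pi \<and> s \<in> {1,-1::real} \<and>
      (\<forall>t\<in>{0<..<\<delta>}. h (\<phi> (vv C)) * cis (s * t) \<in> h ` \<phi> ` closure C)"
      unfolding vv_def by (rule someI_ex) (rule key[OF that])
    then have "\<exists>s \<delta>. vv C \<in> V \<and> vv C \<in> closure C \<and> \<delta> > 0 \<and> \<delta> \<le> pi \<and> s \<in> {1,-1::real} \<and>
      (\<forall>t\<in>{0<..<\<delta>}. h (\<phi> (vv C)) * cis (s * t) \<in> h ` \<phi> ` closure C)" by blast
    then show ?thesis unfolding ss_def by (rule someI_ex)
  qed
  have "(\<lambda>C. (vv C, ss C)) ` Cs \<subseteq> V \<times> {1,-1}" using key2 by auto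
  moreover have "finite (V \<times> {1,-1::real})" using V by simp
  ultimately have "\<not> inj_on (\<lambda>C. (vv C, ss C)) Cs"
    using infCs finite_imageD finite_subset by blast
  then obtain C1 C2 where C12: "C1 \<in> Cs" "C2 \<in> Cs" "C1 \<noteq> C2" "vv C1 = vv C2" "ss C1 = ss C2"
    unfolding inj_on_def by blast
  obtain \<delta>1 where d1: "\<delta>1 > 0" "\<delta>1 \<le> pi" "vv C1 \<in> V" "ss C1 \<in> {1,-1}"
      "\<forall>t\<in>{0<..<\<delta>1}. h (\<phi> (vv C1)) * cis (ss C1 * t) \<in> h ` \<phi> ` closure C1"
    using key2[OF C12(1)] by blast
  obtain \<delta>2 where d2: "\<delta>2 > 0"
      "\<forall>t\<in>{0<..<\<delta>2}. h (\<phi> (vv C1)) * cis (ss C1 * t) \<in> h ` \<phi> ` closure C2"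
    using key2[OF C12(2)] C12 by auto
  define c where "c = h (\<phi> (vv C1))"
  define s where "s = ss C1"
  define \<delta> where "\<delta> = min \<delta>1 \<delta>2"
  have c0: "c \<noteq> 0"
  proof -
    have "vv C1 \<in> G" using d1 V by auto
    then have "c \<in> sphere 0 1" using hG' \<phi>(2) c_def by auto
    then show ?thesis by auto
  qed
  have injP: "inj_on (\<lambda>t. c * cis (s * t)) {0<..<\<delta>}"
  proof
    fix t1 t2 assume t: "t1 \<in> {0<..<\<delta>}" "t2 \<in> {0<..<\<delta>}" "c * cis (s * t1) = c * cis (s * t2)"
    then have "cis (s * t1) = cis (s * t2)" using c0 by simp
    then have "Arg (cis (s * t1)) = Arg (cis (s * t2))" by simp
    moreover have "s * t1 \<in> {-pi<..pi}" "s * t2 \<in> {-pi<..pi}"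
      using t(1,2) d1(2,4) by (auto simp: \<delta>_def s_def)
    ultimately have "s * t1 = s * t2" by (simp add: Arg_cis)
    then show "t1 = t2" using d1(4) by (auto simp: s_def)
  qed
  have "infinite ((\<lambda>t. c * cis (s * t)) ` {0<..<\<delta>})"
  proof
    assume "finite ((\<lambda>t. c * cis (s * t)) ` {0<..<\<delta>})"
    then have "finite {0<..<\<delta>}" using injP finite_imageD by blast
    moreover have "\<delta> > 0" using d1(1) d2(1) by (simp add: \<delta>_def)
    ultimately show False using infinite_Ioo[of 0 \<delta>] by blast
  qed
  moreover have "finite (h ` \<phi> ` V)" using V by simp
  ultimately have "infinite ((\<lambda>t. c * cis (s * t)) ` {0<..<\<delta>} - h ` \<phi> ` V)"
    using Diff_infinite_finite by blast
  then obtain t where t: "t \<in> {0<..<\<delta>}" "c * cis (s * t) \<notin> h ` \<phi> ` V"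
    by (metis (no_types, lifting) DiffE ex_in_conv finite.emptyI imageE)
  define q where "q = c * cis (s * t)"
  have "q \<in> h ` \<phi> ` closure C1" using d1(5) t by (auto simp: q_def c_def s_def \<delta>_def)
  then obtain p1 where p1: "p1 \<in> closure C1" "q = h (\<phi> p1)" by auto
  have "q \<in> h ` \<phi> ` closure C2" using d2(2) t by (auto simp: q_def c_def s_def \<delta>_def)
  then obtain p2 where p2: "p2 \<in> closure C2" "q = h (\<phi> p2)" by auto
  have C1c: "C1 \<in> components (G - V)" and C2c: "C2 \<in> components (G - V)" using C12 by (auto simp: Cs_def)
  have p1V: "p1 \<notin> V" using p1 t by (auto simp: q_def)
  have p2V: "p2 \<notin> V" using p2 t by (auto simp: q_def)
  have p1C: "p1 \<in> C1" by (rule comp_closure[OF G C1c p1(1) p1V])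
  have p2C: "p2 \<in> C2" by (rule comp_closure[OF G C2c p2(1) p2V])
  have p1G: "p1 \<in> G" and p2G: "p2 \<in> G"
    using p1C p2C in_components_subset[OF C1c] in_components_subset[OF C2c] by auto
  have eq: "\<phi> p1 = \<phi> p2" using hinj p1G p2G \<phi>(2) p1(2) p2(2) by auto
  define F where "F = {x\<in>G. \<phi> x = \<phi> p1}"
  have cF: "connected F" using fib p1G \<phi>(2) by (auto simp: F_def)
  have FV: "F \<subseteq> G - V"
  proof
    fix x assume "x \<in> F"
    moreover have "x \<notin> V" if "x \<in> V" "\<phi> x = \<phi> p1"
    proof -
      have "h (\<phi> p1) \<in> h ` \<phi> ` V" using that by (metis image_eqI)
      then show ?thesis using t p1(2) by (simp add: q_def)
    qed
    ultimately show "x \<in> G - V" by (auto simp: F_def)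
  qed
  have "F \<subseteq> C1" using components_maximal[OF C1c cF FV] p1C p1G by (auto simp: F_def)
  moreover have "F \<subseteq> C2" using components_maximal[OF C2c cF FV] p2C p2G eq by (auto simp: F_def)
  moreover have "p1 \<in> F" using p1G by (simp add: F_def)
  ultimately show False using components_nonoverlap[OF C1c C2c] C12(3) by blast
qed

lemma end_lemma:
  fixes G :: "'a::metric_space set" and hC :: "'a \<Rightarrow> real"
  assumes G: "compact G" and V: "finite V" and CG: "C \<subseteq> G"
    and cl: "\<And>p. p \<in> closure C \<Longrightarrow> p \<notin> V \<Longrightarrow> p \<in> C"
    and hom: "homeomorphism C {0<..<1} hC hinv"
    and u: "\<And>k. u k \<in> {0<..<1}" "u \<longlonglongrightarrow> 0" "(\<lambda>k. hinv (u k)) \<longlonglongrightarrow> a"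
    and v: "\<And>k. v k \<in> {0<..<1}" "v \<longlonglongrightarrow> 0" "(\<lambda>k. hinv (v k)) \<longlonglongrightarrow> b"
  shows "a = b"
proof (rule ccontr)
  assume ab: "a \<noteq> b"
  define K where "K \<delta> = closure (hinv ` {0<..<\<delta>})" for \<delta> :: real
  have hinvC: "hinv ` {0<..<1} = C" and hCC: "hC ` C = {0<..<1}"
    and hinv_cont: "continuous_on {0<..<1} hinv" and hC_cont: "continuous_on C hC"
    and hCinv: "\<And>s. s \<in> {0<..<1} \<Longrightarrow> hC (hinv s) = s"
    using hom unfolding homeomorphism_def by auto
  have closedG: "closed G" using G compact_imp_closed by blast
  have KG: "K \<delta> \<subseteq> closure C" if "\<delta> \<le> 1" for \<delta>
    unfolding K_def using that hinvC by (intro closure_mono) auto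
  have clCG: "closure C \<subseteq> G" using CG closedG closure_minimal by blast
  have memK: "x \<in> K \<delta>" if "\<delta> > 0" and w: "\<And>k. w k \<in> {0<..<1}" "w \<longlonglongrightarrow> 0" "(\<lambda>k. hinv (w k)) \<longlonglongrightarrow> x" for \<delta> x w
  proof -
    have "eventually (\<lambda>k. w k < \<delta>) sequentially"
      using order_tendstoD(2)[OF w(2) that(1)] .
    then have "eventually (\<lambda>k. hinv (w k) \<in> K \<delta>) sequentially"
      by eventually_elim (use w(1) in \<open>auto simp: K_def intro!: closure_subset[THEN subsetD]\<close>)
    then show ?thesis using Lim_in_closed_set[OF _ _ _ w(3)] by (auto simp: K_def)
  qed
  have inV: "p \<in> V" if p: "\<And>\<delta>. \<delta> > 0 \<Longrightarrow> p \<in> K \<delta>" for p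
  proof (rule ccontr)
    assume pV: "p \<notin> V"
    have "p \<in> closure C" using p[of 1] KG[of 1] by auto
    then have pC: "p \<in> C" using cl pV by auto
    define r where "r = hC p"
    have r: "r \<in> {0<..<1}" using pC hCC r_def by auto
    have "p \<in> closure (hinv ` {0<..<r/2})" using p[of "r/2"] r by (auto simp: K_def)
    then obtain q where q: "\<And>j. q j \<in> hinv ` {0<..<r/2}" "q \<longlonglongrightarrow> p"
      unfolding closure_sequential by blast
    have qC: "q j \<in> C" for j using q(1)[of j] r hinvC by auto
    have lim: "(\<lambda>j. hC (q j)) \<longlonglongrightarrow> hC p"
      by (rule continuous_on_tendsto_compose[OF hC_cont q(2) pC]) (use qC in auto)
    have "hC (q j) \<le> r/2" for j
    proof -
      obtain s where "s \<in> {0<..<r/2}" "q j = hinv s" using q(1)[of j] by auto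
      then show ?thesis using hCinv[of s] r by auto
    qed
    then have "hC p \<le> r/2" using LIMSEQ_le_const2[OF lim] by blast
    then show False using r r_def by auto
  qed
  have aV: "a \<in> V" using inV memK[OF _ u] by blast
  have "finite ((dist a) ` V)" using V by simp
  moreover have "infinite {0<..<dist a b}" using ab by simp
  ultimately obtain \<rho> where \<rho>: "\<rho> \<in> {0<..<dist a b}" "\<rho> \<notin> (dist a) ` V"
    by (meson finite_subset subsetI)
  have d1: "1 / real (Suc j) \<le> 1" for j by (simp add: divide_le_eq)
  have sub1: "{0<..<1 / real (Suc j)} \<subseteq> {0<..<1}" for j
  proof
    fix x assume "x \<in> {0<..<1 / real (Suc j)}"
    then have "0 < x" "x < 1 / real (Suc j)" by auto
    moreover have "x < 1" using d1[of j] \<open>x < 1 / real (Suc j)\<close> by linarith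
    ultimately show "x \<in> {0<..<1}" by auto
  qed
  have "\<exists>p. p \<in> K (1 / Suc j) \<and> dist a p = \<rho>" for j
  proof -
    have "connected (hinv ` {0<..<1 / Suc j})"
      by (rule connected_continuous_image[OF continuous_on_subset[OF hinv_cont sub1]]) simp
    then have cK: "connected (K (1 / Suc j))" unfolding K_def by (rule connected_imp_connected_closure)
    have "connected ((dist a) ` K (1 / Suc j))"
      by (rule connected_continuous_image[OF _ cK]) (intro continuous_intros)
    moreover have "a \<in> K (1 / Suc j)" "b \<in> K (1 / Suc j)"
      using memK[OF _ u] memK[OF _ v] by auto
    ultimately have "\<rho> \<in> (dist a) ` K (1 / Suc j)"
      unfolding connected_iff_interval using \<rho> by (metis dist_self greaterThanLessThan_iff image_eqI less_imp_le)
    then show ?thesis by auto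
  qed
  then obtain P where P: "\<And>j. P j \<in> K (1 / Suc j)" "\<And>j. dist a (P j) = \<rho>" by metis
  have PG: "P j \<in> G" for j using P(1)[of j] KG[of "1 / Suc j"] clCG d1[of j] by auto
  obtain p \<sigma> where p: "p \<in> G" "strict_mono \<sigma>" "(P \<circ> \<sigma>) \<longlonglongrightarrow> p"
    using seq_compactE[OF compact_imp_seq_compact[OF G], of P] PG by blast
  have "(\<lambda>j. dist a ((P \<circ> \<sigma>) j)) \<longlonglongrightarrow> dist a p"
    by (intro tendsto_intros p(3))
  then have dp: "dist a p = \<rho>" using P(2) by (simp add: o_def LIMSEQ_const_iff)
  have "p \<in> K \<delta>" if "\<delta> > 0" for \<delta>
  proof -
    obtain J :: nat where J: "1 / Suc J < \<delta>"
      using nat_approx_posE[OF \<open>\<delta> > 0\<close>] by blast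
    have "eventually (\<lambda>j. (P \<circ> \<sigma>) j \<in> K \<delta>) sequentially"
    proof (rule eventually_sequentiallyI[of J])
      fix j assume "J \<le> j"
      then have "J \<le> \<sigma> j" using seq_suble[OF p(2), of j] by linarith
      then have "1 / real (Suc (\<sigma> j)) \<le> 1 / Suc J" by (simp add: frac_le)
      then have "hinv ` {0<..<1 / Suc (\<sigma> j)} \<subseteq> hinv ` {0<..<\<delta>}" using J by auto
      then show "(P \<circ> \<sigma>) j \<in> K \<delta>" using P(1)[of "\<sigma> j"] unfolding K_def o_def
        using closure_mono by blast
    qed
    then show ?thesis using Lim_in_closed_set[OF _ _ _ p(3)] by (auto simp: K_def)
  qed
  then have "p \<in> V" using inV by blast
  then show False using dp \<rho> by auto
qed


lemma flip_homeo: "homeomorphism {0<..<1::real} {0<..<1} (\<lambda>r. 1 - r) (\<lambda>r. 1 - r)"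
proof -
  have "(\<lambda>r. 1 - r) ` {0<..<1::real} = {0<..<1}"
  proof
    show "(\<lambda>r. 1 - r) ` {0<..<1::real} \<subseteq> {0<..<1}" by auto
    show "{0<..<1} \<subseteq> (\<lambda>r. 1 - r) ` {0<..<1::real}"
    proof
      fix x :: real assume "x \<in> {0<..<1}"
      then have "1 - x \<in> {0<..<1}" "x = 1 - (1 - x)" by auto
      then show "x \<in> (\<lambda>r. 1 - r) ` {0<..<1}" by blast
    qed
  qed
  then show ?thesis unfolding homeomorphism_def by (auto intro!: continuous_intros)
qed

lemma core2:
  fixes G :: "'a::metric_space set" and \<phi> :: "'a \<Rightarrow> 'b" and hC :: "'a \<Rightarrow> real"
    and a b :: "nat \<Rightarrow> 'a" and w :: "nat \<Rightarrow> 'b"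
  assumes G: "compact G" and V: "finite V" and C: "C \<in> components (G - V)"
    and hom: "homeomorphism C {0<..<1} hC hinv"
    and ab: "\<And>k. a k \<in> C" "\<And>k. b k \<in> C" "\<And>k. \<phi> (a k) = w k" "\<And>k. \<phi> (b k) = w k"
    and w: "inj w"
    and connF: "\<And>k. connected {p\<in>G. \<phi> p = w k}" and Fsub: "\<And>k. {p\<in>G. \<phi> p = w k} \<subseteq> C"
    and eps: "\<epsilon> > 0" "\<And>k. dist (a k) (b k) \<ge> \<epsilon>"
  shows False
proof -
  have CG: "C \<subseteq> G" using in_components_subset[OF C] by auto
  have hinvC: "hinv ` {0<..<1} = C" and hCC: "hC ` C = {0<..<1}"
    and hinv_cont: "continuous_on {0<..<1} hinv" and hC_cont: "continuous_on C hC"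
    and hCinv: "\<And>s. s \<in> {0<..<1} \<Longrightarrow> hC (hinv s) = s"
    and hinvC': "\<And>p. p \<in> C \<Longrightarrow> hinv (hC p) = p"
    using hom unfolding homeomorphism_def by auto
  define u where "u k = hC (a k)" for k
  define v where "v k = hC (b k)" for k
  have uv01: "u k \<in> {0<..<1}" "v k \<in> {0<..<1}" for k using ab hCC by (auto simp: u_def v_def)
  define X where "X k = ((a k, b k), (u k, v k))" for k
  have "compact ((G \<times> G) \<times> ({0..1::real} \<times> {0..1::real}))"
    using G by (intro compact_Times) auto
  moreover have "\<forall>k. X k \<in> (G \<times> G) \<times> ({0..1::real} \<times> {0..1::real})"
    using uv01 ab CG by (auto simp: X_def less_imp_le)
  ultimately obtain L and \<sigma> :: "nat \<Rightarrow> nat" where L: "L \<in> (G \<times> G) \<times> ({0..1::real} \<times> {0..1::real})" "strict_mono \<sigma>" "(X \<circ> \<sigma>) \<longlonglongrightarrow> L"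
    using seq_compactE[OF compact_imp_seq_compact] by metis
  obtain A B s t where Leq: "L = ((A, B), (s, t))" by (metis prod.collapse)
  have st01: "s \<in> {0..1}" "t \<in> {0..1}" using L(1) Leq by auto
  have limA: "(\<lambda>k. a (\<sigma> k)) \<longlonglongrightarrow> A" using tendsto_fst[OF tendsto_fst[OF L(3)]] by (simp add: Leq X_def o_def)
  have limB: "(\<lambda>k. b (\<sigma> k)) \<longlonglongrightarrow> B" using tendsto_snd[OF tendsto_fst[OF L(3)]] by (simp add: Leq X_def o_def)
  have limu: "(\<lambda>k. u (\<sigma> k)) \<longlonglongrightarrow> s" using tendsto_fst[OF tendsto_snd[OF L(3)]] by (simp add: Leq X_def o_def)
  have limv: "(\<lambda>k. v (\<sigma> k)) \<longlonglongrightarrow> t" using tendsto_snd[OF tendsto_snd[OF L(3)]] by (simp add: Leq X_def o_def)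
  have "(\<lambda>k. dist (a (\<sigma> k)) (b (\<sigma> k))) \<longlonglongrightarrow> dist A B" by (intro tendsto_intros limA limB)
  then have "\<epsilon> \<le> dist A B" using eps(2) by (intro LIMSEQ_le_const) auto
  then have AB: "A \<noteq> B" using eps(1) by auto
  have au: "a k = hinv (u k)" "b k = hinv (v k)" for k using hinvC' ab by (auto simp: u_def v_def)
  have st: "s = t"
  proof (rule ccontr)
    assume nst: "s \<noteq> t"
    define m where "m = (s + t) / 2"
    define e where "e = \<bar>t - s\<bar> / 2"
    have e: "e > 0" using nst by (simp add: e_def)
    have "eventually (\<lambda>k. dist (u (\<sigma> k)) s < e) sequentially" by (rule tendstoD[OF limu e])
    moreover have "eventually (\<lambda>k. dist (v (\<sigma> k)) t < e) sequentially" by (rule tendstoD[OF limv e])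
    ultimately have "eventually (\<lambda>k. dist (u (\<sigma> k)) s < e \<and> dist (v (\<sigma> k)) t < e) sequentially"
      by (rule eventually_conj)
    then obtain N where N: "\<And>k. k \<ge> N \<Longrightarrow> dist (u (\<sigma> k)) s < e \<and> dist (v (\<sigma> k)) t < e"
      unfolding eventually_sequentially by blast
    have mem: "\<exists>p. p \<in> {p\<in>G. \<phi> p = w (\<sigma> k)} \<and> hC p = m" if "k \<ge> N" for k
    proof -
      have d: "\<bar>u (\<sigma> k) - s\<bar> < e" "\<bar>v (\<sigma> k) - t\<bar> < e" using N[OF that] by (auto simp: dist_real_def)
      have btw: "(u (\<sigma> k) \<le> m \<and> m \<le> v (\<sigma> k)) \<or> (v (\<sigma> k) \<le> m \<and> m \<le> u (\<sigma> k))"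
      proof (cases "s < t")
        case True
        then have ee: "e = (t - s) / 2" by (simp add: e_def)
        have i: "u (\<sigma> k) - s < e" "t - v (\<sigma> k) < e" using d unfolding abs_less_iff by auto
        have "u (\<sigma> k) \<le> m" using ee i unfolding m_def by (simp add: field_simps)
        moreover have "m \<le> v (\<sigma> k)" using ee i unfolding m_def by (simp add: field_simps)
        ultimately show ?thesis by blast
      next
        case False
        then have ee: "e = (s - t) / 2" by (simp add: e_def)
        have i: "s - u (\<sigma> k) < e" "v (\<sigma> k) - t < e" using d unfolding abs_less_iff by auto
        have "v (\<sigma> k) \<le> m" using ee i unfolding m_def by (simp add: field_simps)
        moreover have "m \<le> u (\<sigma> k)" using ee i unfolding m_def by (simp add: field_simps)
        ultimately show ?thesis by blast
      qed
      have "connected (hC ` {p\<in>G. \<phi> p = w (\<sigma> k)})"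
        by (rule connected_continuous_image[OF continuous_on_subset[OF hC_cont Fsub] connF])
      moreover have "u (\<sigma> k) \<in> hC ` {p\<in>G. \<phi> p = w (\<sigma> k)}" "v (\<sigma> k) \<in> hC ` {p\<in>G. \<phi> p = w (\<sigma> k)}"
        using ab CG unfolding u_def v_def by (auto intro!: imageI)
      ultimately have "m \<in> hC ` {p\<in>G. \<phi> p = w (\<sigma> k)}"
        unfolding connected_iff_interval using btw by blast
      then show ?thesis by auto
    qed
    obtain p1 where p1: "p1 \<in> G" "\<phi> p1 = w (\<sigma> N)" "hC p1 = m" using mem[of N] by auto
    obtain p2 where p2: "p2 \<in> G" "\<phi> p2 = w (\<sigma> (Suc N))" "hC p2 = m" using mem[of "Suc N"] by auto
    have "p1 \<in> C" "p2 \<in> C" using Fsub p1 p2 by auto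
    then have "p1 = p2" using hinvC' p1(3) p2(3) by metis
    then have "w (\<sigma> N) = w (\<sigma> (Suc N))" using p1 p2 by simp
    then have "\<sigma> N = \<sigma> (Suc N)" using w by (simp add: inj_eq)
    then show False using L(2) by (simp add: strict_mono_eq)
  qed
  have clC: "\<And>p. p \<in> closure C \<Longrightarrow> p \<notin> V \<Longrightarrow> p \<in> C" using comp_closure[OF G C] by blast
  have "A = B"
  proof (cases "s = 0")
    case True
    show ?thesis
      by (rule end_lemma[OF G V CG clC hom, of "u \<circ> \<sigma>" A "v \<circ> \<sigma>" B])
         (use uv01 limu limv limA limB True st in \<open>auto simp: o_def au\<close>)
  next
    case s0: False
    show ?thesis
    proof (cases "s = 1")
      case True
      have hom1: "homeomorphism C {0<..<1} ((\<lambda>r. 1 - r) \<circ> hC) (hinv \<circ> (\<lambda>r. 1 - r))"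
        by (rule homeomorphism_compose[OF hom flip_homeo])
      have l1: "(\<lambda>k. 1 - u (\<sigma> k)) \<longlonglongrightarrow> 0" using tendsto_diff[OF tendsto_const[of 1] limu] True by simp
      have l2: "(\<lambda>k. 1 - v (\<sigma> k)) \<longlonglongrightarrow> 0" using tendsto_diff[OF tendsto_const[of 1] limv] True st by simp
      show ?thesis
        by (rule end_lemma[OF G V CG clC hom1, of "\<lambda>k. 1 - u (\<sigma> k)" A "\<lambda>k. 1 - v (\<sigma> k)" B])
           (use uv01 l1 l2 limA limB in \<open>auto simp: o_def au\<close>)
    next
      case False
      then have s01: "s \<in> {0<..<1}" using s0 st01 by auto
      have "(\<lambda>k. hinv (u (\<sigma> k))) \<longlonglongrightarrow> hinv s"
        by (rule continuous_on_tendsto_compose[OF hinv_cont limu s01]) (use uv01 in auto)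
      moreover have "(\<lambda>k. hinv (v (\<sigma> k))) \<longlonglongrightarrow> hinv s"
        by (rule continuous_on_tendsto_compose[OF hinv_cont]) (use uv01 limv st s01 in auto)
      ultimately have "A = hinv s" "B = hinv s" using limA limB LIMSEQ_unique unfolding au by blast+
      then show ?thesis by simp
    qed
  qed
  then show False using AB by simp
qed


lemma core:
  fixes G :: "'a::metric_space set" and \<phi> :: "'a \<Rightarrow> 'b::metric_space"
    and a b :: "nat \<Rightarrow> 'a" and w :: "nat \<Rightarrow> 'b"
  assumes G: "compact G" and V: "finite V" "V \<subseteq> G"
    and homC: "\<forall>C \<in> components (G - V). C homeomorphic {0<..<(1::real)}"
    and \<phi>: "continuous_on G \<phi>" "\<phi> ` G = G'"
    and fib: "\<forall>y\<in>G'. connected {x\<in>G. \<phi> x = y}"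
    and hh: "homeomorphism G' (sphere (0::complex) 1) h k"
    and ab: "\<And>k. a k \<in> G" "\<And>k. b k \<in> G" "\<And>k. \<phi> (a k) = w k" "\<And>k. \<phi> (b k) = w k"
    and w: "inj w"
    and eps: "\<epsilon> > 0" "\<And>k. dist (a k) (b k) \<ge> \<epsilon>"
  shows False
proof -
  define Cs where "Cs = {C \<in> components (G - V). \<exists>p\<in>C. \<phi> p \<notin> \<phi> ` V}"
  have finCs: "finite Cs" unfolding Cs_def by (rule fin_comps[OF G V homC \<phi> fib hh])
  define Good where "Good = {k. w k \<notin> \<phi> ` V}"
  have "finite (w -` (\<phi> ` V))" using V w by (intro finite_vimageI) auto
  moreover have "Good = UNIV - w -` (\<phi> ` V)" by (auto simp: Good_def)
  ultimately have infGood: "infinite Good" by (simp add: Diff_infinite_finite)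
  define comp where "comp k = connected_component_set (G - V) (a k)" for k
  have fibk: "{p\<in>G. \<phi> p = w k} \<subseteq> comp k \<and> comp k \<in> Cs" if "k \<in> Good" for k
  proof -
    have akV: "a k \<in> G - V"
    proof -
      have "a k \<notin> V"
      proof
        assume "a k \<in> V"
        then have "w k \<in> \<phi> ` V" using ab(3)[of k] by (metis image_eqI)
        then show False using that by (simp add: Good_def)
      qed
      then show ?thesis using ab(1) by auto
    qed
    have compc: "comp k \<in> components (G - V)" unfolding comp_def by (rule componentsI[OF akV])
    have akc: "a k \<in> comp k" unfolding comp_def using akV by (simp add: mem_Collect_eq)
    have wG: "w k \<in> G'" using ab(1,3) \<phi>(2) by (metis image_eqI)
    have con: "connected {p\<in>G. \<phi> p = w k}" using fib wG by auto
    have sub: "{p\<in>G. \<phi> p = w k} \<subseteq> G - V"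
    proof
      fix p assume "p \<in> {p\<in>G. \<phi> p = w k}"
      moreover have False if "p \<in> V" "\<phi> p = w k"
      proof -
        have "w k \<in> \<phi> ` V" using that by (metis image_eqI)
        then show False using \<open>k \<in> Good\<close> by (simp add: Good_def)
      qed
      ultimately show "p \<in> G - V" by auto
    qed
    have "{p\<in>G. \<phi> p = w k} \<subseteq> comp k"
      unfolding comp_def by (rule connected_component_maximal) (use ab(1,3) con sub in auto)
    moreover have "comp k \<in> Cs"
    proof -
      have "\<phi> (a k) \<notin> \<phi> ` V" using ab(3)[of k] that by (simp add: Good_def)
      then show ?thesis using compc akc unfolding Cs_def by blast
    qed
    ultimately show ?thesis by blast
  qed
  have "finite (comp ` Good)" using fibk finCs by (meson finite_subset image_subsetI)
  then obtain k0 where k0: "k0 \<in> Good" "infinite {k \<in> Good. comp k = comp k0}"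
    using pigeonhole_infinite[OF infGood] by blast
  define C0 where "C0 = comp k0"
  have C0c: "C0 \<in> components (G - V)" using fibk[OF k0(1)] by (auto simp: C0_def Cs_def)
  then obtain hC :: "'a \<Rightarrow> real" and hinv where hom: "homeomorphism C0 {0<..<1} hC hinv"
    using homC homeomorphic_def by blast
  obtain r :: "nat \<Rightarrow> nat" where r: "strict_mono r" "\<And>n. r n \<in> {k \<in> Good. comp k = comp k0}"
    using infinite_enumerate[OF k0(2)] by blast
  have FC0: "{p\<in>G. \<phi> p = w (r n)} \<subseteq> C0" for n using fibk r(2)[of n] by (auto simp: C0_def)
  show False
  proof (rule core2[OF G V(1) C0c hom, of "a \<circ> r" "b \<circ> r" \<phi> "w \<circ> r" \<epsilon>])
    show "(a \<circ> r) n \<in> C0" "(b \<circ> r) n \<in> C0" for n using FC0[of n] ab by auto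
    show "\<phi> ((a \<circ> r) n) = (w \<circ> r) n" "\<phi> ((b \<circ> r) n) = (w \<circ> r) n" for n using ab by auto
    show "inj (w \<circ> r)" using w r(1) strict_mono_imp_inj_on inj_compose by blast
    show "connected {p \<in> G. \<phi> p = (w \<circ> r) n}" for n
    proof -
      have "w (r n) \<in> G'" using ab(1,3)[of "r n"] \<phi>(2) by (metis image_eqI)
      then show ?thesis using fib by auto
    qed
    show "{p \<in> G. \<phi> p = (w \<circ> r) n} \<subseteq> C0" for n using FC0 by auto
    show "\<epsilon> > 0" "dist ((a \<circ> r) n) ((b \<circ> r) n) \<ge> \<epsilon>" for n using eps by auto
  qed
qed


lemma cis_rat:
  assumes "cis (2 * pi * \<alpha> * real m) = cis (2 * pi * \<alpha> * real n)" "m \<noteq> n" "\<alpha> \<notin> \<rat>"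
  shows False
proof -
  have "cis (2 * pi * \<alpha> * real m) / cis (2 * pi * \<alpha> * real n) = 1" using assms(1) by simp
  then have "cis (2 * pi * \<alpha> * (real m - real n)) = 1" by (simp add: cis_divide right_diff_distrib)
  then have "Re (cis (2 * pi * \<alpha> * (real m - real n))) = 1" by simp
  then have "cos (2 * pi * \<alpha> * (real m - real n)) = 1" by simp
  then obtain j :: int where j: "2 * pi * \<alpha> * (real m - real n) = of_int j * 2 * pi" using cos_one_2pi_int by blast
  have "(2 * pi) * (\<alpha> * (real m - real n)) = (2 * pi) * of_int j" using j by (simp add: algebra_simps)
  then have "\<alpha> * (real m - real n) = j" using pi_gt_zero by (simp only: mult_left_cancel)
  moreover have "real m - real n \<noteq> 0" using assms(2) by simp
  ultimately have "\<alpha> = j / (real m - real n)" by (simp add: field_simps)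
  also have "\<dots> \<in> \<rat>" by (intro Rats_divide Rats_diff) (auto simp: Rats_of_int Rats_of_nat)
  finally show False using assms(3) by simp
qed

theorem lemma3p1:
  fixes G :: "'a::metric_space set" and G' :: "'b::metric_space set"
    and f :: "'a \<Rightarrow> 'a" and g :: "'b \<Rightarrow> 'b" and \<phi> :: "'a \<Rightarrow> 'b" and E :: "'a set"
  assumes "is_graph G" and "is_graph G'"
    and "continuous_on G f" and "f ` G \<subseteq> G"
    and "continuous_on G' g" and "g ` G' \<subseteq> G'"
    and "closed E" and "E \<subseteq> G" and "f ` E \<subseteq> E"
    and "semi_conjugacy G f G' g \<phi>"
    and "almost_conjugacy G f E G' g \<phi>"
    and "irrational_rotation G' g"
  shows "\<not> (\<exists>x\<in>G. \<exists>y\<in>G. scrambled_pair f x y)"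
proof
  assume "\<exists>x\<in>G. \<exists>y\<in>G. scrambled_pair f x y"
  then obtain x y where xG: "x \<in> G" and yG: "y \<in> G" and sc: "scrambled_pair f x y" by blast
  from assms(1) obtain V where G: "compact G" and V: "finite V" "V \<subseteq> G"
    and homC: "\<forall>C \<in> components (G - V). C homeomorphic {0<..<(1::real)}"
    unfolding is_graph_def by blast
  from assms(11) have \<phi>: "continuous_on G \<phi>" "\<phi> ` G = G'" and semi: "\<forall>p\<in>G. \<phi> (f p) = g (\<phi> p)"
    and fib: "\<forall>y\<in>G'. connected {x\<in>G. \<phi> x = y}"
    unfolding almost_conjugacy_def semi_conjugacy_def by blast+
  from assms(12) obtain h k \<alpha> where hh: "homeomorphism G' (sphere (0::complex) 1) h k" and \<alpha>: "\<alpha> \<notin> \<rat>"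
    and rot: "\<forall>u\<in>G'. h (g u) = cis (2 * pi * \<alpha>) * h u"
    unfolding irrational_rotation_def by blast
  have hcont: "continuous_on G' h" and hG': "h ` G' = sphere 0 1"
    using hh unfolding homeomorphism_def by auto
  have hinj: "\<And>u u'. u \<in> G' \<Longrightarrow> u' \<in> G' \<Longrightarrow> h u = h u' \<Longrightarrow> u = u'"
    using hh unfolding homeomorphism_def by metis
  have fG: "(f ^^ n) p \<in> G" if "p \<in> G" for n p
    by (induction n) (use that assms(4) in auto)
  have gG: "(g ^^ n) u \<in> G'" if "u \<in> G'" for n u
    by (induction n) (use that assms(6) in auto)
  have semin: "\<phi> ((f ^^ n) p) = (g ^^ n) (\<phi> p)" if "p \<in> G" for n p
    by (induction n) (use that semi fG in auto)
  have rotn: "h ((g ^^ n) u) = cis (2 * pi * \<alpha> * real n) * h u" if "u \<in> G'" for n u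
  proof (induction n)
    case 0
    then show ?case by simp
  next
    case (Suc n)
    have "h ((g ^^ Suc n) u) = cis (2 * pi * \<alpha>) * h ((g ^^ n) u)" using rot gG[OF that] by simp
    also have "\<dots> = cis (2 * pi * \<alpha>) * cis (2 * pi * \<alpha> * real n) * h u" using Suc by simp
    also have "\<dots> = cis (2 * pi * \<alpha> * real (Suc n)) * h u" by (simp add: cis_mult algebra_simps)
    finally show ?case .
  qed
  have hsph: "norm (h u) = 1" if "u \<in> G'" for u using hG' that by auto
  have \<phi>xG: "\<phi> x \<in> G'" "\<phi> y \<in> G'" using xG yG \<phi>(2) by auto
  show False
  proof (cases "\<phi> x = \<phi> y")
    case False
    define d0 where "d0 = norm (h (\<phi> x) - h (\<phi> y))"
    have d0: "d0 > 0" using hinj[OF \<phi>xG] False by (auto simp: d0_def)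
    have dn: "dist (h (\<phi> ((f ^^ n) x))) (h (\<phi> ((f ^^ n) y))) = d0" for n
    proof -
      have "dist (h (\<phi> ((f ^^ n) x))) (h (\<phi> ((f ^^ n) y)))
          = norm (cis (2 * pi * \<alpha> * real n) * (h (\<phi> x) - h (\<phi> y)))"
        using semin[OF xG] semin[OF yG] rotn[OF \<phi>xG(1)] rotn[OF \<phi>xG(2)]
        by (simp add: dist_norm right_diff_distrib)
      also have "\<dots> = d0" by (simp add: norm_mult d0_def)
      finally show ?thesis .
    qed
    have "continuous_on G (\<lambda>p. h (\<phi> p))"
      by (rule continuous_on_compose2[OF hcont \<phi>(1)]) (use \<phi>(2) in auto)
    then have "uniformly_continuous_on G (\<lambda>p. h (\<phi> p))" using G compact_uniformly_continuous by blast
    then obtain \<eta> where \<eta>: "\<eta> > 0" "\<forall>p\<in>G. \<forall>p'\<in>G. dist p' p < \<eta> \<longrightarrow> dist (h (\<phi> p')) (h (\<phi> p)) < d0"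
      unfolding uniformly_continuous_on_def using d0 by blast
    have "\<eta> \<le> dist ((f ^^ n) x) ((f ^^ n) y)" for n
    proof (rule ccontr)
      assume "\<not> ?thesis"
      then have "dist (h (\<phi> ((f ^^ n) x))) (h (\<phi> ((f ^^ n) y))) < d0"
        using \<eta>(2) fG[OF xG] fG[OF yG] by auto
      then show False using dn[of n] by simp
    qed
    then have "ereal \<eta> \<le> liminf (\<lambda>n. ereal (dist ((f ^^ n) x) ((f ^^ n) y)))"
      by (intro Liminf_bounded) auto
    then show False using sc \<eta>(1) unfolding scrambled_pair_def by (simp add: zero_ereal_def)
  next
    case True
    have lim: "(\<lambda>n. dist ((f ^^ n) x) ((f ^^ n) y)) \<longlonglongrightarrow> 0"
    proof (rule ccontr)
      assume "\<not> ?thesis"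
      then obtain \<epsilon> where \<epsilon>: "\<epsilon> > 0" "\<forall>no. \<exists>n\<ge>no. \<not> norm (dist ((f ^^ n) x) ((f ^^ n) y) - 0) < \<epsilon>"
        unfolding LIMSEQ_iff by blast
      then have "infinite {n. \<epsilon> \<le> dist ((f ^^ n) x) ((f ^^ n) y)}"
        unfolding infinite_nat_iff_unbounded_le by (simp add: not_less)
      then obtain r :: "nat \<Rightarrow> nat" where r: "strict_mono r" "\<And>j. \<epsilon> \<le> dist ((f ^^ r j) x) ((f ^^ r j) y)"
        using infinite_enumerate by blast
      show False
      proof (rule core[OF G V homC \<phi> fib hh, of "\<lambda>j. (f ^^ r j) x" "\<lambda>j. (f ^^ r j) y" "\<lambda>j. (g ^^ r j) (\<phi> x)" \<epsilon>])
        show "(f ^^ r j) x \<in> G" "(f ^^ r j) y \<in> G" for j using fG xG yG by auto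
        show "\<phi> ((f ^^ r j) x) = (g ^^ r j) (\<phi> x)" "\<phi> ((f ^^ r j) y) = (g ^^ r j) (\<phi> x)" for j
          using semin xG yG True by auto
        show "\<epsilon> > 0" "\<epsilon> \<le> dist ((f ^^ r j) x) ((f ^^ r j) y)" for j using \<epsilon> r by auto
        show "inj (\<lambda>j. (g ^^ r j) (\<phi> x))"
        proof
          fix i j assume eq: "(g ^^ r i) (\<phi> x) = (g ^^ r j) (\<phi> x)"
          show "i = j"
          proof (rule ccontr)
            assume "i \<noteq> j"
            then have rij: "r i \<noteq> r j" using r(1) strict_mono_eq by auto
            have "cis (2 * pi * \<alpha> * real (r i)) * h (\<phi> x) = cis (2 * pi * \<alpha> * real (r j)) * h (\<phi> x)"
              using eq rotn[OF \<phi>xG(1)] by metis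
            moreover have "h (\<phi> x) \<noteq> 0" using hsph[OF \<phi>xG(1)] by auto
            ultimately have "cis (2 * pi * \<alpha> * real (r i)) = cis (2 * pi * \<alpha> * real (r j))" by simp
            then show False using cis_rat rij \<alpha> by blast
          qed
        qed
      qed
    qed
    have "limsup (\<lambda>n. ereal (dist ((f ^^ n) x) ((f ^^ n) y))) = ereal 0"
      by (rule lim_imp_Limsup) (auto intro: tendsto_ereal lim)
    then show False using sc unfolding scrambled_pair_def by (simp add: zero_ereal_def)
  qed
qed

end
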